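(* Consider the minimum time problem with the time-invariant dynamics $\dot y(t)=\bar Ay(t)+\bar Bu(t)$, $u(t)\in[-1,1]^m$, $y(0)=0$ in $\mathbb{R}^n$ (with $\bar A=-A$, $\bar B=-B$), under the setting in the context. Assume the normality condition $$\operatorname{rank}\{B\omega,AB\omega,\dots,A^{n-1}B\omega\}=n$$ for each nonzero vector $\omega$ along an edge of $U=[-1,1]^m$ (or, if $m=1$, for $\omega$ the two end points of $U=[-1,1]$). Then for any $i\in\{1,\dots,K\}$, $$\int_0^{t_i}\|\hat u(t)-\hat u_h(t)\|_1\,dt\to0\quad\text{as }h\to0.$$
   Context: Here $A\in\mathbb{R}^{n\times n}$, $B\in\mathbb{R}^{n\times m}$ are constant, the target is $\mathcal{S}=\{0\}$, $U=[-1,1]^m$, $t_0=0$, $\|x\|_1=\sum_\mu|x_\mu|$. Fix $t_f>0$, integers $K,N$, $\Delta t=t_f/K$, $h=\Delta t/N$, $t_k=k\Delta t$, $t_{kj}=t_k+jh$ ($j=0,\dots,N$), $t_{k0}=t_{(k-1)N}$. $\mathcal{R}(t_i)$ denotes the (convex compact) reachable set at time $t_i$ of the system $\dot y=\bar Ay+\bar Bu$, $u(t)\in U$ measurable, $y(0)=0$, and $\mathcal{R}_{h\Delta}(t_i)$ its fully discrete approximation: with matrices $\Phi_h(s,r)$ approximating $e^{\bar A(s-r)}$ (one-step method, semigroup property $\Phi_h(s,r)=\Phi_h(s,q)\Phi_h(q,r)$), weights $c_{kj}\ge0$, finite direction sets $S^\Delta_{\mathcal{R}}\subset S_{n-1}$,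 $S^\Delta_U\subset S_{m-1}$ and supporting points $y(l,A)\in\arg\max_{a\in A}\langle l,a\rangle$: $Y_{h\Delta}(t_0)=\{0\}$, $\tilde Y(t_{k+1})=\Phi_h(t_{k+1},t_k)Y_{h\Delta}(t_k)+h\sum_jc_{(k+1)j}\Phi_h(t_{k+1},t_{kj})\bar B\{y(\eta,U):\eta\in S^\Delta_U\}$, $Y_{h\Delta}(t_{k+1})=\{y(l,\operatorname{co}\tilde Y(t_{k+1})):l\in S^\Delta_{\mathcal{R}}\}$, $\mathcal{R}_{h\Delta}(t_k)=\operatorname{co}Y_{h\Delta}(t_k)$; it is assumed that $d_H(\mathcal{R}_{h\Delta}(t_i),\mathcal{R}(t_i))\to0$ as $h\downarrow 0$. Adjoints (row vectors): $\eta(\cdot)$ solves $\dot\eta=-\eta\bar A$, $\eta(t_i)=\zeta$; the discrete adjoint solves $\eta_{(i-1)N}=\zeta_h$, $\eta_{k(j-1)}=\eta_{kj}\Phi_h(t_{kj},t_{k(j-1)})$ for $k=i-1,\dots,0$, $j=N,\dots,1$. The end values are chosen nontrivial with $\zeta_h\in N_{\mathcal{R}_{h\Delta}(t_i)}(y_{(i-1)N})$, $\zeta\in N_{\mathcal{R}(t_i)}(y(t_i))$ and $(y_{(i-1)N},\zeta_h)\to(y(t_i),\zeta)$ as $h\downarrow0$ (possible by graphical convergence of these normal cones), where $N_C(x)=\{v:\langle v,c-x\rangle\le0\ \forall c\in C\}$; consequently $\eta_{kj}\to\eta(t_{kj})$ uniformly in $j$. With $\operatorname{sign}$ applied componentwise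 ($1$ if positive, $0$ if zero, $-1$ if negative), define $\hat u(t)=\operatorname{sign}(\eta(t)\bar B)^\top$ on $[0,t_i]$, and $\hat u_h(t)=\hat u_{kj}:=\operatorname{sign}(\eta_{kj}\bar B)^\top$ for $t\in[t_{kj},t_{k(j+1)})$, $k=0,\dots,i-1$, $j=0,\dots,N-1$, with $\hat u_h(t_{(i-1)N})=\hat u_{(i-1)(N-1)}$. *)

theory Defs
  imports "HOL-Analysis.Analysis"
begin

definition sgnvec :: "real^'m \<Rightarrow> real^'m" where
  "sgnvec v = (\<chi> \<mu>. sgn (v $ \<mu>))"

definition norm1 :: "real^'m \<Rightarrow> real" where
  "norm1 v = (\<Sum>\<mu>\<in>UNIV. \<bar>v $ \<mu>\<bar>)"

text \<open>Normality condition: for every nonzero vector omega along an edge of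
  the cube [-1,1]^m (i.e. omega = c e_mu, c nonzero), the vectors
  B omega, A B omega, ..., A^(n-1) B omega have rank n.\<close>
definition normality_cond :: "real^'n^'n \<Rightarrow> real^'m^'n \<Rightarrow> bool" where
  "normality_cond A B \<longleftrightarrow>
     (\<forall>(\<mu>::'m) (c::real). c \<noteq> 0 \<longrightarrow>
        dim (span {((\<lambda>x. A *v x) ^^ k) (B *v axis \<mu> c) | k. k < CARD('n)}) = CARD('n))"

definition hstep :: "real \<Rightarrow> nat \<Rightarrow> nat \<Rightarrow> real" where
  "hstep tf K N = tf / real K / real N"

text \<open>Discrete control u_h: with flattened grid index p = k N + j (so t_kj = p h),
  u_h(t) = sign(eta_p Bbar) on [p h, (p+1) h) for p < i N, and at t = t_i the
  value of the last interval is used.\<close>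
definition uhat_h :: "(nat \<Rightarrow> real^'n) \<Rightarrow> real^'m^'n \<Rightarrow> real \<Rightarrow> nat \<Rightarrow> nat \<Rightarrow> real \<Rightarrow> real^'m" where
  "uhat_h etad Bbar h i N t = sgnvec (etad (min (nat \<lfloor>t / h\<rfloor>) (i * N - 1)) v* Bbar)"

end

theory Submission imports Defs begin
lemma vm_inner: "(x v* M) \<bullet> w = x \<bullet> (M *v w)" for x :: "real^'n" and M :: "real^'m^'n"
  by (simp add: inner_vec_def vector_matrix_mult_def matrix_vector_mult_def sum_distrib_left
      sum_distrib_right mult_ac) (rule sum.swap)

lemma vm_neg: "x v* (- M) = - (x v* M)" for x :: "real^'n" and M :: "real^'m^'n"
  by (simp add: vector_matrix_mult_def vec_eq_iff sum_negf)

lemma deriv_inner: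
  fixes eta :: "real \<Rightarrow> real^'n" and A :: "real^'n^'n"
  assumes "(eta has_vector_derivative (- (eta t v* (- A)))) (at t within S)"
  shows "((\<lambda>t. eta t \<bullet> w) has_real_derivative (eta t \<bullet> (A *v w))) (at t within S)"
proof -
  have "((\<lambda>t. eta t \<bullet> w) has_vector_derivative (eta t v* A) \<bullet> w) (at t within S)"
    using bounded_linear.has_vector_derivative[OF bounded_linear_inner_left assms] by (simp add: vm_neg)
  then show ?thesis by (simp add: vm_inner has_real_derivative_iff_has_vector_derivative)
qed

lemma subsing_finite: "(\<And>x y. x \<in> X \<Longrightarrow> y \<in> X \<Longrightarrow> x = y) \<Longrightarrow> finite X"
  by (metis finite.simps is_singletonI' is_singleton_the_elem)

lemma iso_step:
  fixes g g' :: "real \<Rightarrow> real"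
  assumes d: "\<And>t. t \<in> {a..b} \<Longrightarrow> (g has_real_derivative g' t) (at t within {a..b})"
    and iso: "\<exists>\<delta>>0. \<forall>t\<in>{a..b}. t \<noteq> t0 \<and> \<bar>t - t0\<bar> < \<delta> \<longrightarrow> g' t \<noteq> 0"
  shows "\<exists>\<delta>>0. \<forall>t\<in>{a..b}. t \<noteq> t0 \<and> \<bar>t - t0\<bar> < \<delta> \<longrightarrow> g t \<noteq> 0"
proof -
  obtain \<delta> where dp: "\<delta> > 0" and dd: "\<forall>t\<in>{a..b}. t \<noteq> t0 \<and> \<bar>t - t0\<bar> < \<delta> \<longrightarrow> g' t \<noteq> 0"
    using iso by blast
  define Z where "Z = {t\<in>{a..b}. t \<noteq> t0 \<and> \<bar>t - t0\<bar> < \<delta> \<and> g t = 0}"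
  have cont: "continuous_on {a..b} g"
    using d by (meson DERIV_continuous continuous_on_eq_continuous_within)
  have same: False if xy: "x \<in> Z" "y \<in> Z" "x < y" "(x < t0 \<longleftrightarrow> y < t0)" for x y
  proof -
    have xyab: "a \<le> x" "y \<le> b" using xy unfolding Z_def by auto
    have "\<exists>z. x < z \<and> z < y \<and> (*) (g' z) = (\<lambda>v. 0)"
    proof (rule Rolle_deriv[OF \<open>x<y\<close>])
      show "g x = g y" using xy unfolding Z_def by auto
      show "continuous_on {x..y} g" using continuous_on_subset[OF cont] xyab by auto
      fix z assume z: "x < z" "z < y"
      have "(g has_real_derivative g' z) (at z within {a..b})" using d z xyab by auto
      moreover have "at z within {a..b} = at z" using z xyab by (intro at_within_Icc_at) auto
      ultimately show "(g has_derivative (*) (g' z)) (at z)"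
        by (simp add: has_field_derivative_def)
    qed
    then obtain z where z: "x < z" "z < y" "(*) (g' z) = (\<lambda>v. 0)" by blast
    have "g' z = 0" using fun_cong[OF z(3), of 1] by simp
    moreover have "z \<in> {a..b}" "z \<noteq> t0" "\<bar>z - t0\<bar> < \<delta>"
      using xy z unfolding Z_def by auto
    ultimately show False using dd by auto
  qed
  have "finite (Z \<inter> {..<t0})"
    by (rule subsing_finite) (metis IntE lessThan_iff linorder_neqE_linordered_idom same)
  moreover have "finite (Z \<inter> {t0<..})"
    by (rule subsing_finite) (metis IntE greaterThan_iff linorder_neqE_linordered_idom same order.asym)
  moreover have "Z = (Z \<inter> {..<t0}) \<union> (Z \<inter> {t0<..})" unfolding Z_def by auto
  ultimately have "finite Z" by (metis finite_Un)
  then obtain \<delta>2 where d2: "\<delta>2 > 0" "\<forall>x\<in>Z. x \<noteq> t0 \<longrightarrow> \<delta>2 \<le> dist t0 x"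
    using finite_set_avoid by blast
  show ?thesis
  proof (intro exI[of _ "min \<delta> \<delta>2"] conjI ballI impI)
    show "min \<delta> \<delta>2 > 0" using dp d2 by simp
    fix t assume t: "t \<in> {a..b}" "t \<noteq> t0 \<and> \<bar>t - t0\<bar> < min \<delta> \<delta>2"
    show "g t \<noteq> 0"
    proof
      assume "g t = 0"
      then have "t \<in> Z" using t unfolding Z_def by auto
      then have "\<delta>2 \<le> dist t0 t" using d2 t by auto
      then show False using t by (simp add: dist_real_def abs_minus_commute)
    qed
  qed
qed

lemma zeros_finite:
  fixes eta :: "real \<Rightarrow> real^'n" and A :: "real^'n^'n" and B :: "real^'m^'n"
  assumes d: "\<forall>t\<in>{0..T}. (eta has_vector_derivative (- (eta t v* (- A)))) (at t within {0..T})"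
    and nz: "\<And>t. t \<in> {0..T} \<Longrightarrow> eta t \<noteq> 0"
    and nc: "normality_cond A B"
  shows "finite {t\<in>{0..T}. eta t \<bullet> (B *v axis \<mu> 1) = 0}"
proof -
  define w where "w k = ((\<lambda>x. A *v x)^^k) (B *v axis \<mu> 1)" for k
  have wS: "A *v w k = w (Suc k)" for k by (simp add: w_def)
  define \<psi> where "\<psi> k t = eta t \<bullet> w k" for k t
  have d\<psi>: "(\<psi> k has_real_derivative \<psi> (Suc k) t) (at t within {0..T})" if "t \<in> {0..T}" for k t
    using deriv_inner[OF d[rule_format, OF that], of "w k"] wS unfolding \<psi>_def by simp
  have loc: "\<exists>\<delta>>0. \<forall>t\<in>{0..T}. t \<noteq> t0 \<and> \<bar>t - t0\<bar> < \<delta> \<longrightarrow> \<psi> 0 t \<noteq> 0"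
    if t0: "t0 \<in> {0..T}" for t0
  proof -
    have "dim {w k | k. k < CARD('n)} = CARD('n)"
      proof -
      have "dim (span {((\<lambda>x. A *v x) ^^ k) (B *v axis \<mu> (1::real)) | k. k < CARD('n)}) = CARD('n)"
        using nc unfolding normality_cond_def by simp
      then show ?thesis unfolding w_def dim_span .
    qed
    then have sp: "span {w k | k. k < CARD('n)} = UNIV"
    proof -
      have "DIM(real^'n) = CARD('n)" by simp
      then show ?thesis using dim_eq_full[of "{w k | k. k < CARD('n)}"] \<open>dim {w k | k. k < CARD('n)} = CARD('n)\<close> by simp
    qed
    obtain k where k: "\<psi> k t0 \<noteq> 0"
    proof (rule ccontr)
      assume "\<not> thesis"
      then have "\<forall>k. \<psi> k t0 = 0" using that by blast
      then have "orthogonal (eta t0) y" if "y \<in> {w k | k. k < CARD('n)}" for y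
        using that unfolding \<psi>_def orthogonal_def by auto
      then have "orthogonal (eta t0) (eta t0)"
        using orthogonal_to_span[of "eta t0" "{w k | k. k < CARD('n)}"] sp by blast
      then show False using nz[OF t0] by (simp add: orthogonal_def)
    qed
    have base: "\<exists>\<delta>>0. \<forall>t\<in>{0..T}. t \<noteq> t0 \<and> \<bar>t - t0\<bar> < \<delta> \<longrightarrow> \<psi> k t \<noteq> 0"
    proof -
      have "continuous (at t0 within {0..T}) (\<psi> k)"
        using d\<psi>[OF t0] by (rule DERIV_continuous)
      then have "((\<psi> k) \<longlongrightarrow> \<psi> k t0) (at t0 within {0..T})"
        by (simp add: continuous_within)
      then have "\<forall>\<^sub>F t in at t0 within {0..T}. \<psi> k t \<noteq> 0"
        using k tendsto_imp_eventually_ne by blast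
      then show ?thesis unfolding eventually_at by (auto simp: dist_real_def)
    qed
    have "\<exists>\<delta>>0. \<forall>t\<in>{0..T}. t \<noteq> t0 \<and> \<bar>t - t0\<bar> < \<delta> \<longrightarrow> \<psi> (k - m) t \<noteq> 0" if "m \<le> k" for m
      using that
    proof (induction m)
      case 0
      then show ?case using base by simp
    next
      case (Suc m)
      then have IH: "\<exists>\<delta>>0. \<forall>t\<in>{0..T}. t \<noteq> t0 \<and> \<bar>t - t0\<bar> < \<delta> \<longrightarrow> \<psi> (Suc (k - Suc m)) t \<noteq> 0"
        using Suc_diff_Suc[of m k] by simp
      show ?case
        by (rule iso_step[OF _ IH]) (rule d\<psi>)
    qed
    from this[of k] show ?thesis by simp
  qed
  show ?thesis
  proof (rule ccontr)
    let ?Z = "{t\<in>{0..T}. eta t \<bullet> (B *v axis \<mu> 1) = 0}"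
    assume inf: "infinite ?Z"
    have bd: "bounded ?Z" by (rule bounded_subset[of "{0..T}"]) auto
    obtain x where x: "x islimpt ?Z"
      using bounded_infinite_imp_islimpt[OF order_refl bd inf] by blast
    have "x \<in> closure ?Z" using x by (simp add: closure_def)
    moreover have "closure ?Z \<subseteq> {0..T}" by (rule closure_minimal) auto
    ultimately have xS: "x \<in> {0..T}" by blast
    obtain \<delta> where dp: "\<delta> > 0" and dd: "\<forall>t\<in>{0..T}. t \<noteq> x \<and> \<bar>t - x\<bar> < \<delta> \<longrightarrow> \<psi> 0 t \<noteq> 0"
      using loc[OF xS] by blast
    obtain y where "y \<in> ?Z" "y \<noteq> x" "dist y x < \<delta>"
      using x dp unfolding islimpt_approachable by blast
    then show False using dd unfolding \<psi>_def w_def by (auto simp: dist_real_def)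
  qed
qed

lemma eta_nz:
  fixes eta :: "real \<Rightarrow> real^'n" and A :: "real^'n^'n"
  assumes d: "\<forall>t\<in>{0..T}. (eta has_vector_derivative (- (eta t v* (- A)))) (at t within {0..T})"
    and eT: "eta T \<noteq> 0" and t1: "t1 \<in> {0..T}"
  shows "eta t1 \<noteq> 0"
proof
  assume e0: "eta t1 = 0"
  obtain C where C: "C > 0" "\<And>x. norm (transpose A *v x) \<le> norm x * C"
    using bounded_linear.pos_bounded[OF matrix_vector_mul_bounded_linear[of "transpose A"]] by blast
  have C': "norm (x v* A) \<le> norm x * C" for x using C(2)[of x] by simp
  define g where "g t = eta t \<bullet> eta t" for t
  define h where "h t = g t * exp (- (2 * C) * t)" for t
  have dg: "(g has_real_derivative 2 * (eta t \<bullet> (eta t v* A))) (at t within {0..T})"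
    if "t \<in> {0..T}" for t
  proof -
    have "((\<lambda>t. eta t \<bullet> eta t) has_vector_derivative
        (eta t \<bullet> (eta t v* A) + (eta t v* A) \<bullet> eta t)) (at t within {0..T})"
      using bounded_bilinear.has_vector_derivative[OF bounded_bilinear_inner, of eta "eta t v* A" t "{0..T}" eta]
        d that by (simp add: vm_neg)
    then show ?thesis unfolding g_def has_real_derivative_iff_has_vector_derivative
      by (simp add: inner_commute)
  qed
  have dh: "(h has_real_derivative (2 * (eta t \<bullet> (eta t v* A)) * exp (- (2 * C) * t)
        + g t * (exp (- (2 * C) * t) * (- (2 * C))))) (at t within {0..T})"
    if "t \<in> {0..T}" for t
    unfolding h_def by (rule derivative_eq_intros dg[OF that] refl | simp)+
  have le: "2 * (eta t \<bullet> (eta t v* A)) * exp (- (2 * C) * t)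
        + g t * (exp (- (2 * C) * t) * (- (2 * C))) \<le> 0" for t
  proof -
    have "2 * (eta t \<bullet> (eta t v* A)) \<le> 2 * (norm (eta t) * (norm (eta t) * C))"
    proof -
      have "eta t \<bullet> (eta t v* A) \<le> norm (eta t) * norm (eta t v* A)" by (rule norm_cauchy_schwarz)
      also have "\<dots> \<le> norm (eta t) * (norm (eta t) * C)" by (rule mult_left_mono[OF C'[of "eta t"]]) simp
      finally show ?thesis by simp
    qed
    also have "\<dots> = 2 * C * g t" unfolding g_def by (simp add: power2_norm_eq_inner[symmetric] power2_eq_square)
    finally have "2 * (eta t \<bullet> (eta t v* A)) - 2 * C * g t \<le> 0" by simp
    then have "(2 * (eta t \<bullet> (eta t v* A)) - 2 * C * g t) * exp (- (2 * C) * t) \<le> 0"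
      by (simp add: mult_nonpos_nonneg)
    then show ?thesis by (simp add: algebra_simps)
  qed
  have con: "continuous_on {t1..T} h"
  proof -
    have "continuous_on {0..T} h"
      using dh by (meson DERIV_continuous continuous_on_eq_continuous_within)
    then show ?thesis by (rule continuous_on_subset) (use t1 in auto)
  qed
  have der: "\<exists>y. DERIV h x :> y \<and> y \<le> 0" if x: "t1 < x" "x < T" for x
  proof -
    have "at x within {0..T} = at x" using x t1 by (intro at_within_Icc_at) auto
    then show ?thesis using dh[of x] le[of x] x t1 by auto
  qed
  have "h T \<le> h t1"
    using DERIV_nonpos_imp_decreasing_open[of t1 T h, OF _ der con] t1 by auto
  moreover have "h t1 = 0" using e0 by (simp add: h_def g_def)
  moreover have "h T > 0" using eT by (simp add: h_def g_def)
  ultimately show False by simp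
qed
lemma idx_meas: "(\<lambda>t. min (nat \<lfloor>t / h\<rfloor>) (c::nat)) \<in> lebesgue_on {a..b::real} \<rightarrow>\<^sub>M count_space UNIV"
proof -
  have "(\<lambda>t. t / h) \<in> borel_measurable (lebesgue_on {a..b::real})"
    unfolding divide_inverse by (rule continuous_imp_measurable_on_sets_lebesgue) (auto intro!: continuous_intros)
  then have "(\<lambda>t. \<lfloor>t / h\<rfloor>) \<in> lebesgue_on {a..b::real} \<rightarrow>\<^sub>M count_space UNIV"
    using measurable_compose[OF _ measurable_real_floor] by blast
  then show ?thesis by measurable
qed
lemma vm_nth: "(x v* M) $ \<mu> = x \<bullet> (M *v axis \<mu> 1)" for x :: "real^'n" and M :: "real^'m^'n"
  using vm_inner[of x M "axis \<mu> 1"] by (simp add: inner_axis)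

lemma sgn_event:
  fixes f :: "'a \<Rightarrow> real"
  assumes "(f \<longlongrightarrow> L) F" "L \<noteq> 0"
  shows "\<forall>\<^sub>F x in F. sgn (f x) = sgn L"
proof (cases "L > 0")
  case True
  then show ?thesis using order_tendstoD(1)[OF assms(1) True] by (auto elim: eventually_mono)
next
  case False
  then have "L < 0" using assms(2) by simp
  then show ?thesis using order_tendstoD(2)[OF assms(1) \<open>L<0\<close>] by (auto elim: eventually_mono)
qed

lemma idx_props:
  fixes h t T :: real and M :: nat
  assumes h: "h > 0" and M: "M \<ge> 1" and T: "T = real M * h" and t: "t \<in> {0..T}"
  shows "min (nat \<lfloor>t/h\<rfloor>) (M-1) \<le> M" "real (min (nat \<lfloor>t/h\<rfloor>) (M-1)) * h \<in> {0..T}"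
    "\<bar>real (min (nat \<lfloor>t/h\<rfloor>) (M-1)) * h - t\<bar> \<le> h"
proof -
  define p where "p = nat \<lfloor>t/h\<rfloor>"
  have th: "t / h \<ge> 0" using t h by simp
  have rp: "real p = real_of_int \<lfloor>t/h\<rfloor>" unfolding p_def using th by simp
  have p1: "real p \<le> t / h" "t / h < real p + 1" using rp by linarith+
  have p2: "real p * h \<le> t" "t < real p * h + h"
    using p1 h by (simp_all add: field_simps)
  show "min (nat \<lfloor>t/h\<rfloor>) (M-1) \<le> M" by simp
  have M1: "real (M - 1) = real M - 1" using M by simp
  have "real (min (nat \<lfloor>t/h\<rfloor>) (M-1)) * h \<in> {0..T} \<and>
    \<bar>real (min (nat \<lfloor>t/h\<rfloor>) (M-1)) * h - t\<bar> \<le> h"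
  proof (cases "p \<le> M - 1")
    case True
    then have "min (nat \<lfloor>t/h\<rfloor>) (M-1) = p" unfolding p_def by simp
    then show ?thesis using p2 t h by auto
  next
    case False
    then have "min (nat \<lfloor>t/h\<rfloor>) (M-1) = M - 1" unfolding p_def by simp
    moreover have "real (M-1) * h = T - h" using M1 T by (simp add: algebra_simps)
    moreover have "real M * h \<ge> h" using M h by simp
    moreover have pm: "real p * h \<ge> real M * h"
      using False M h by (intro mult_right_mono) auto
    moreover have "real M * h \<le> t" using pm p2 by linarith
    ultimately show ?thesis using t h T by (simp add: abs_le_iff)
  qed
  then show "real (min (nat \<lfloor>t/h\<rfloor>) (M-1)) * h \<in> {0..T}"
    "\<bar>real (min (nat \<lfloor>t/h\<rfloor>) (M-1)) * h - t\<bar> \<le> h" by auto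
qed

lemma sgn_diff_le: "\<bar>sgn (x::real) - sgn y\<bar> \<le> 2"
  by (auto simp: sgn_if)

theorem proposition3p13:
  fixes A :: "real^'n^'n" and B :: "real^'m^'n"
    and tf :: real and K i :: nat
    and Phi :: "nat \<Rightarrow> real \<Rightarrow> real \<Rightarrow> real^'n^'n"
    and zeta :: "real^'n" and zetah :: "nat \<Rightarrow> real^'n"
    and eta :: "real \<Rightarrow> real^'n"
    and etad :: "nat \<Rightarrow> nat \<Rightarrow> real^'n"
  assumes tf_pos: "tf > 0"
    and K_pos: "K \<ge> 1"
    and i_range: "i \<in> {1..K}"
    and normality: "normality_cond A B"
    and semigroup: "\<forall>N s q r. Phi N s r = Phi N s q ** Phi N q r"
    and zeta_nz: "zeta \<noteq> 0"
    and eta_end: "eta (real i * (tf / real K)) = zeta"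
    and eta_ode: "\<forall>t\<in>{0..real i * (tf / real K)}.
        (eta has_vector_derivative (- (eta t v* (- A)))) (at t within {0..real i * (tf / real K)})"
    and zetah_nz: "\<forall>N. zetah N \<noteq> 0"
    and etad_end: "\<forall>N. etad N (i * N) = zetah N"
    and etad_rec: "\<forall>N p. 1 \<le> p \<and> p \<le> i * N \<longrightarrow>
        etad N (p - 1) = etad N p v* Phi N (real p * hstep tf K N) (real (p - 1) * hstep tf K N)"
    and etad_conv: "\<forall>\<epsilon>>0. \<forall>\<^sub>F N in sequentially. \<forall>p\<le>i * N.
        norm (etad N p - eta (real p * hstep tf K N)) < \<epsilon>"
  shows "(\<lambda>N. integral {0..real i * (tf / real K)}
            (\<lambda>t. norm1 (sgnvec (eta t v* (- B)) - uhat_h (etad N) (- B) (hstep tf K N) i N t)))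
         \<longlonglongrightarrow> 0"
proof -
  define T where "T = real i * (tf / real K)"
  have i1: "i \<ge> 1" "i \<le> K" using i_range by auto
  have Kp: "real K > 0" using K_pos by simp
  have Tp: "T > 0" unfolding T_def using i1 Kp tf_pos by simp
  define hh where "hh N = hstep tf K N" for N
  define idx where "idx N t = min (nat \<lfloor>t / hh N\<rfloor>) (i * N - 1)" for N t
  define a where "a \<mu> t = (eta t v* (-B)) $ \<mu>" for \<mu> t
  define b where "b N \<mu> t = (etad N (idx N t) v* (-B)) $ \<mu>" for N \<mu> t
  define F where "F N t = (\<Sum>\<mu>\<in>UNIV. \<bar>sgn (a \<mu> t) - sgn (b N \<mu> t)\<bar>)" for N t
  have Feq: "(\<lambda>t. norm1 (sgnvec (eta t v* - B) - uhat_h (etad N) (- B) (hstep tf K N) i N t)) = F N" for N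
    by (simp add: fun_eq_iff norm1_def sgnvec_def uhat_h_def F_def a_def b_def idx_def hh_def)
  have d: "\<forall>t\<in>{0..T}. (eta has_vector_derivative (- (eta t v* (- A)))) (at t within {0..T})"
    using eta_ode unfolding T_def .
  have nz: "eta t \<noteq> 0" if "t \<in> {0..T}" for t
    using eta_nz[OF d _ that] eta_end zeta_nz unfolding T_def by simp
  have cont: "continuous_on {0..T} eta"
    using d by (meson has_vector_derivative_continuous continuous_on_eq_continuous_within)
  have aeq: "a \<mu> t = - (eta t \<bullet> (B *v axis \<mu> 1))" for \<mu> t
    by (simp add: a_def vm_neg vm_nth)
  define Z where "Z = (\<Union>\<mu>. {t\<in>{0..T}. eta t \<bullet> (B *v axis \<mu> 1) = 0})"
  have finZ: "finite Z" unfolding Z_def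
    using zeros_finite[OF d nz normality] by auto
  have anz: "a \<mu> t \<noteq> 0" if "t \<in> {0..T}" "t \<notin> Z" for \<mu> t
    using that unfolding aeq Z_def by auto
  have Fnn: "F N t \<ge> 0" for N t unfolding F_def by (rule sum_nonneg) simp
  have Fb: "F N t \<le> 2 * real CARD('m)" for N t
  proof -
    have "F N t \<le> (\<Sum>\<mu>\<in>(UNIV::'m set). 2)" unfolding F_def
      by (rule sum_mono) (rule sgn_diff_le)
    then show ?thesis by simp
  qed
  have acont: "continuous_on {0..T} (a \<mu>)" for \<mu>
    unfolding aeq by (intro continuous_intros cont)
  have meas: "F N \<in> borel_measurable (lebesgue_on {0..T})" for N
  proof -
    have am: "(\<lambda>t. sgn (a \<mu> t)) \<in> borel_measurable (lebesgue_on {0..T})" for \<mu>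
      using measurable_compose[OF continuous_imp_measurable_on_sets_lebesgue[OF acont] borel_measurable_sgn]
      by simp
    have bm: "(\<lambda>t. sgn (b N \<mu> t)) \<in> borel_measurable (lebesgue_on {0..T})" for \<mu>
      unfolding b_def idx_def
      by (rule measurable_compose_countable[where f="\<lambda>p x. sgn ((etad N p v* (-B)) $ \<mu>)", OF _ idx_meas]) simp
    show ?thesis unfolding F_def
      by (intro borel_measurable_sum borel_measurable_abs borel_measurable_diff am bm)
  qed
  have integ: "F N integrable_on {0..T}" for N
  proof (rule measurable_bounded_by_integrable_imp_integrable[OF meas])
    show "(\<lambda>_. 2 * real CARD('m)) integrable_on {0..T}" by (rule integrable_const_ivl)
    show "norm (F N x) \<le> 2 * real CARD('m)" for x using Fnn Fb by simp
  qed simp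
  define G where "G N t = (if t \<in> Z then 0 else F N t)" for N t
  have intG: "G N integrable_on {0..T}" for N
    by (rule integrable_spike_finite[OF finZ _ integ]) (simp add: G_def)
  have eqint: "integral {0..T} (F N) = integral {0..T} (G N)" for N
    by (rule integral_spike[OF negligible_finite[OF finZ]]) (simp add: G_def)
  have hh0: "hh \<longlonglongrightarrow> 0"
  proof -
    have "hh = (\<lambda>N. (tf / real K) / real N)" by (simp add: fun_eq_iff hh_def hstep_def)
    then show ?thesis using lim_const_over_n[of "tf / real K"] by simp
  qed
  have et: "(\<lambda>N. etad N (idx N t)) \<longlonglongrightarrow> eta t" if t: "t \<in> {0..T}" for t
  proof (rule tendstoI)
    fix \<epsilon> :: real assume ep: "\<epsilon> > 0"
    obtain \<delta> where dp: "\<delta> > 0" and dd: "\<forall>s\<in>{0..T}. dist s t < \<delta> \<longrightarrow> dist (eta s) (eta t) < \<epsilon>/2"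
      using cont t ep unfolding continuous_on_iff by (metis half_gt_zero)
    have e1: "\<forall>\<^sub>F N in sequentially. hh N < \<delta>" using order_tendstoD(2)[OF hh0 dp] .
    have e2: "\<forall>\<^sub>F N in sequentially. N \<ge> 1" by (rule eventually_ge_at_top)
    have e3: "\<forall>\<^sub>F N in sequentially. \<forall>p\<le>i * N. norm (etad N p - eta (real p * hh N)) < \<epsilon>/2"
    proof -
      have "\<epsilon>/2 > 0" using ep by simp
      then show ?thesis using etad_conv unfolding hh_def by blast
    qed
    show "\<forall>\<^sub>F N in sequentially. dist (etad N (idx N t)) (eta t) < \<epsilon>"
      using e1 e2 e3
    proof eventually_elim
      case (elim N)
      have hp: "hh N > 0" using elim(2) tf_pos Kp unfolding hh_def hstep_def by simp
      have M1: "i * N \<ge> 1" using elim(2) i1 by simp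
      have TM: "T = real (i * N) * hh N" using elim(2) Kp unfolding T_def hh_def hstep_def
        by (simp add: field_simps)
      note ip = idx_props[OF hp M1 TM t, folded idx_def]
      have "dist (etad N (idx N t)) (eta t) \<le> dist (etad N (idx N t)) (eta (real (idx N t) * hh N))
          + dist (eta (real (idx N t) * hh N)) (eta t)" by (rule dist_triangle)
      also have "dist (etad N (idx N t)) (eta (real (idx N t) * hh N)) < \<epsilon>/2"
        using elim(3) ip(1) by (simp add: dist_norm)
      also have "dist (eta (real (idx N t) * hh N)) (eta t) < \<epsilon>/2"
        using dd ip(2,3) elim(1) by (simp add: dist_real_def)
      finally show ?case by simp
    qed
  qed
  have conv: "(\<lambda>N. G N t) \<longlonglongrightarrow> 0" if t: "t \<in> {0..T}" for t
  proof (cases "t \<in> Z")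
    case True
    then show ?thesis by (simp add: G_def)
  next
    case False
    have "(\<lambda>N. b N \<mu> t) \<longlonglongrightarrow> a \<mu> t" for \<mu>
      unfolding a_def b_def vm_nth by (intro tendsto_inner et[OF t] tendsto_const)
    then have "\<forall>\<^sub>F N in sequentially. sgn (b N \<mu> t) = sgn (a \<mu> t)" for \<mu>
      using sgn_event anz[OF t False] by blast
    then have "\<forall>\<^sub>F N in sequentially. \<forall>\<mu>. sgn (b N \<mu> t) = sgn (a \<mu> t)"
      by (rule eventually_all_finite)
    then have "\<forall>\<^sub>F N in sequentially. G N t = 0"
      by (rule eventually_mono) (simp add: G_def F_def False)
    then show ?thesis by (rule tendsto_eventually)
  qed
  have "(\<lambda>N. integral {0..T} (G N)) \<longlonglongrightarrow> integral {0..T} (\<lambda>_. 0::real)"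
  proof (rule dominated_convergence(2)[OF intG])
    show "(\<lambda>_. 2 * real CARD('m)) integrable_on {0..T}" by (rule integrable_const_ivl)
    show "norm (G N x) \<le> 2 * real CARD('m)" if "x \<in> {0..T}" for N x
      using Fnn Fb by (simp add: G_def)
    show "(\<lambda>N. G N x) \<longlonglongrightarrow> 0" if "x \<in> {0..T}" for x using conv[OF that] .
  qed
  then show ?thesis unfolding Feq T_def[symmetric] eqint by simp
qed

end
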